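(* Let $\mathcal{G}=(G,\lambda)$ be a simple temporal clique, $G=(V,E)$, let $\mathcal{T}^-=(V,E^-_T)$ be obtained by the forward construction and $\mathcal{T}^+=(V,E^+_T)$ by the backward construction, let $X^-$ be the set of emitters and $X^+$ the set of collectors, and let $E_H=\{\{u,v\}\in E: u\in X^-, v\in X^+\}$. Then the bidirectional fireworks cover $S=\{\{u,v\}:(u,v)\in E^-_T\cup E^+_T\}\cup E_H$ is a temporal spanner of $\mathcal{G}$.
   Context: A simple temporal clique is a pair $\mathcal{G}=(G,\lambda)$ where $G=(V,E)$ is the complete graph on a finite vertex set $V$ and $\lambda:E\to\mathbb{N}$ assigns to each edge a single integer label such that any two distinct edges sharing an endpoint have different labels; the label of an arc $(x,y)$ is $\lambda(\{x,y\})$. A journey from $x$ to $y$ is a sequence of vertices $x=u_0,\dots,u_k=y$ ($k\ge1$) with $\lambda(\{u_{i-1},u_i\})<\lambda(\{u_i,u_{i+1}\})$ for $1\le i<k$. A set $E'\subseteq E$ is a temporal spanner of $\mathcal{G}$ if for every ordered pair of distinct vertices $x,y$ there is a journey from $x$ to $y$ using only edges of $E'$. For a vertex $v$, $e^-(v)$ (resp. $e^+(v)$) is the edge incident to $v$ with smallest (resp. largest) label. Forward construction: let $E^-$ be the set of arcs $(u,v)$ with $\{u,v\}=e^-(v)$, except that if $e^-(u)=e^-(v)=\{u,v\}$ only one of $(u,v),(v,u)$ is included (arbitrarily). Initialize $E^-_T:=E^-$; for every vertex $v$ of out-degree at least $2$ in $(V,E^-)$, with out-arcs $(v,u_1),\dots,(v,u_\ell)$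 where $(v,u_\ell)$ has the largest label, for each $i<\ell$: if $u_i$ has out-degree $0$ in $(V,E^-)$ replace $(v,u_i)$ by $(u_i,v)$ in $E^-_T$, otherwise remove $(v,u_i)$ from $E^-_T$. Emitters are vertices of out-degree $0$ in $(V,E^-_T)$. Backward construction: let $E^+$ be the set of arcs $(v,u)$ with $\{u,v\}=e^+(v)$, except that if $e^+(u)=e^+(v)=\{u,v\}$ only one of $(u,v),(v,u)$ is included (arbitrarily). Initialize $E^+_T:=E^+$; for every vertex $v$ of in-degree at least $2$ in $(V,E^+)$, with in-arcs $(u_1,v),\dots,(u_\ell,v)$ where $(u_\ell,v)$ has the smallest label, for each $i<\ell$: if $u_i$ has in-degree $0$ in $(V,E^+)$ replace $(u_i,v)$ by $(v,u_i)$ in $E^+_T$, otherwise remove $(u_i,v)$ from $E^+_T$. Collectors are vertices of in-degree $0$ in $(V,E^+_T)$. *)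

theory Defs
  imports Main
begin

text \<open>Vertices have type 'a; V is the finite vertex set; edges are two-element sets;
  lam is the labelling (only its values on clique edges matter). Arcs are pairs.\<close>

definition clique_edges :: "'a set \<Rightarrow> 'a set set" where
  "clique_edges V = {{u, v} | u v. u \<in> V \<and> v \<in> V \<and> u \<noteq> v}"

definition simple_temporal_clique :: "'a set \<Rightarrow> ('a set \<Rightarrow> nat) \<Rightarrow> bool" where
  "simple_temporal_clique V lam \<longleftrightarrow> finite V \<and>
     (\<forall>e \<in> clique_edges V. \<forall>f \<in> clique_edges V. e \<noteq> f \<and> e \<inter> f \<noteq> {} \<longrightarrow> lam e \<noteq> lam f)"

definition e_min :: "'a set \<Rightarrow> ('a set \<Rightarrow> nat) \<Rightarrow> 'a \<Rightarrow> 'a set" where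
  "e_min V lam v = arg_min_on lam {e \<in> clique_edges V. v \<in> e}"

definition e_max :: "'a set \<Rightarrow> ('a set \<Rightarrow> nat) \<Rightarrow> 'a \<Rightarrow> 'a set" where
  "e_max V lam v = arg_max_on lam {e \<in> clique_edges V. v \<in> e}"

definition minus_arcs :: "'a set \<Rightarrow> ('a set \<Rightarrow> nat) \<Rightarrow> ('a \<times> 'a) set" where
  "minus_arcs V lam = {(u, v). u \<in> V \<and> v \<in> V \<and> u \<noteq> v \<and> {u, v} = e_min V lam v}"

definition plus_arcs :: "'a set \<Rightarrow> ('a set \<Rightarrow> nat) \<Rightarrow> ('a \<times> 'a) set" where
  "plus_arcs V lam = {(v, u). u \<in> V \<and> v \<in> V \<and> u \<noteq> v \<and> {u, v} = e_max V lam v}"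

text \<open>A is an admissible choice from the candidate arcs C: every candidate arc is kept,
  except that of two opposite candidate arcs exactly one is kept (arbitrarily).\<close>
definition valid_choice :: "('a \<times> 'a) set \<Rightarrow> ('a \<times> 'a) set \<Rightarrow> bool" where
  "valid_choice C A \<longleftrightarrow> A \<subseteq> C \<and>
     (\<forall>u v. (u, v) \<in> C \<longrightarrow> (u, v) \<in> A \<or> (v, u) \<in> A) \<and>
     (\<forall>u v. (u, v) \<in> A \<longrightarrow> (v, u) \<notin> A)"

definition outdeg :: "('a \<times> 'a) set \<Rightarrow> 'a \<Rightarrow> nat" where
  "outdeg A v = card {u. (v, u) \<in> A}"

definition indeg :: "('a \<times> 'a) set \<Rightarrow> 'a \<Rightarrow> nat" where
  "indeg A v = card {u. (u, v) \<in> A}"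

text \<open>Forward construction E^-_T from E^- (= A): for v of out-degree at least 2, every
  out-arc (v,u) other than the one of largest label is reversed if u has out-degree 0
  in A, and removed otherwise.\<close>
definition forward_tree :: "('a set \<Rightarrow> nat) \<Rightarrow> ('a \<times> 'a) set \<Rightarrow> ('a \<times> 'a) set" where
  "forward_tree lam A =
     {(v, u). (v, u) \<in> A \<and>
        (outdeg A v < 2 \<or> (\<forall>w. (v, w) \<in> A \<longrightarrow> lam {v, w} \<le> lam {v, u}))}
   \<union> {(u, v). (v, u) \<in> A \<and> outdeg A v \<ge> 2 \<and>
        \<not> (\<forall>w. (v, w) \<in> A \<longrightarrow> lam {v, w} \<le> lam {v, u}) \<and> outdeg A u = 0}"

text \<open>Backward construction E^+_T from E^+ (= B): for v of in-degree at least 2, every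
  in-arc (u,v) other than the one of smallest label is reversed if u has in-degree 0
  in B, and removed otherwise.\<close>
definition backward_tree :: "('a set \<Rightarrow> nat) \<Rightarrow> ('a \<times> 'a) set \<Rightarrow> ('a \<times> 'a) set" where
  "backward_tree lam B =
     {(u, v). (u, v) \<in> B \<and>
        (indeg B v < 2 \<or> (\<forall>w. (w, v) \<in> B \<longrightarrow> lam {u, v} \<le> lam {w, v}))}
   \<union> {(v, u). (u, v) \<in> B \<and> indeg B v \<ge> 2 \<and>
        \<not> (\<forall>w. (w, v) \<in> B \<longrightarrow> lam {u, v} \<le> lam {w, v}) \<and> indeg B u = 0}"

definition emitters :: "'a set \<Rightarrow> ('a \<times> 'a) set \<Rightarrow> 'a set" where
  "emitters V T = {v \<in> V. outdeg T v = 0}"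

definition collectors :: "'a set \<Rightarrow> ('a \<times> 'a) set \<Rightarrow> 'a set" where
  "collectors V T = {v \<in> V. indeg T v = 0}"

definition journey :: "('a set \<Rightarrow> nat) \<Rightarrow> 'a set set \<Rightarrow> 'a list \<Rightarrow> 'a \<Rightarrow> 'a \<Rightarrow> bool" where
  "journey lam E' p x y \<longleftrightarrow> length p \<ge> 2 \<and> hd p = x \<and> last p = y \<and>
     (\<forall>i. i + 1 < length p \<longrightarrow> {p ! i, p ! (i + 1)} \<in> E') \<and>
     (\<forall>i. i + 2 < length p \<longrightarrow> lam {p ! i, p ! (i + 1)} < lam {p ! (i + 1), p ! (i + 2)})"

definition temporal_spanner :: "'a set \<Rightarrow> ('a set \<Rightarrow> nat) \<Rightarrow> 'a set set \<Rightarrow> bool" where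
  "temporal_spanner V lam E' \<longleftrightarrow> E' \<subseteq> clique_edges V \<and>
     (\<forall>x \<in> V. \<forall>y \<in> V. x \<noteq> y \<longrightarrow> (\<exists>p. journey lam E' p x y))"

end

theory Submission
  imports Defs
begin



inductive J :: "('a set \<Rightarrow> nat) \<Rightarrow> 'a set set \<Rightarrow> 'a \<Rightarrow> 'a \<Rightarrow> nat \<Rightarrow> nat \<Rightarrow> bool"
  for lam E where
  Je: "{x, y} \<in> E \<Longrightarrow> J lam E x y (lam {x, y}) (lam {x, y})"
| Jc: "J lam E x y s t \<Longrightarrow> J lam E y z s' t' \<Longrightarrow> t < s' \<Longrightarrow> J lam E x z s t'"

fun jw :: "('a set \<Rightarrow> nat) \<Rightarrow> 'a set set \<Rightarrow> 'a list \<Rightarrow> bool" where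
  "jw lam E (a # b # c # r) = ({a, b} \<in> E \<and> lam {a, b} < lam {b, c} \<and> jw lam E (b # c # r))"
| "jw lam E [a, b] = ({a, b} \<in> E)"
| "jw lam E _ = False"

fun fl :: "('a set \<Rightarrow> nat) \<Rightarrow> 'a list \<Rightarrow> nat" where
  "fl lam (a # b # r) = lam {a, b}"
| "fl lam _ = 0"

fun ll :: "('a set \<Rightarrow> nat) \<Rightarrow> 'a list \<Rightarrow> nat" where
  "ll lam (a # b # c # r) = ll lam (b # c # r)"
| "ll lam [a, b] = lam {a, b}"
| "ll lam _ = 0"

lemma jw_len: "jw lam E p \<Longrightarrow> length p \<ge> 2"
  by (induction lam E p rule: jw.induct) auto

lemma jw_cat: "jw lam E p \<Longrightarrow> jw lam E q \<Longrightarrow> last p = hd q \<Longrightarrow> ll lam p < fl lam q \<Longrightarrow>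
   jw lam E (p @ tl q) \<and> fl lam (p @ tl q) = fl lam p \<and> ll lam (p @ tl q) = ll lam q"
proof (induction lam E p rule: jw.induct)
  case (1 lam E a b c r)
  then show ?case by (cases "r @ tl q") auto
next
  case (2 lam E a b)
  obtain c r where "q = b # c # r" using 2 jw_len[OF 2(2)]
    by (cases q; cases "tl q") auto
  then show ?case using 2 by auto
qed auto

lemma J_jw: "J lam E x y s t \<Longrightarrow> \<exists>p. jw lam E p \<and> hd p = x \<and> last p = y \<and> fl lam p = s \<and> ll lam p = t"
proof (induction rule: J.induct)
  case (Je x y)
  then show ?case by (intro exI[of _ "[x, y]"]) auto
next
  case (Jc x y s t z s' t')
  then obtain p q where p: "jw lam E p" "hd p = x" "last p = y" "fl lam p = s" "ll lam p = t"
    and q: "jw lam E q" "hd q = y" "last q = z" "fl lam q = s'" "ll lam q = t'" by blast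
  have "length p \<ge> 2" "length q \<ge> 2" using p q jw_len by blast+
  then have h1: "hd (p @ tl q) = x" using p by (cases p) auto
  have h2: "last (p @ tl q) = z" using p q \<open>length q \<ge> 2\<close>
    by (cases q; cases "tl q") auto
  show ?case using jw_cat[OF p(1) q(1)] p q Jc h1 h2 by (intro exI[of _ "p @ tl q"]) auto
qed

lemma jw_journey: "jw lam E p \<Longrightarrow> journey lam E p (hd p) (last p)"
proof (induction lam E p rule: jw.induct)
  case (1 lam E a b c r)
  then have IH: "journey lam E (b # c # r) b (last (b # c # r))" by auto
  show ?case unfolding journey_def
  proof (intro conjI allI impI)
    fix i assume "i + 1 < length (a # b # c # r)"
    then show "{(a # b # c # r) ! i, (a # b # c # r) ! (i + 1)} \<in> E"
      using IH 1 unfolding journey_def by (cases i) auto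
  next
    fix i assume "i + 2 < length (a # b # c # r)"
    then show "lam {(a # b # c # r) ! i, (a # b # c # r) ! (i + 1)} < lam {(a # b # c # r) ! (i + 1), (a # b # c # r) ! (i + 2)}"
      using IH 1 unfolding journey_def by (cases i) auto
  qed auto
next
  case (2 lam E a b)
  then show ?case unfolding journey_def by (auto simp: less_Suc_eq)
qed auto

lemma J_journey: "J lam E x y s t \<Longrightarrow> \<exists>p. journey lam E p x y"
  using J_jw jw_journey by metis




locale fw =
  fixes V :: "'a set" and lam :: "'a set \<Rightarrow> nat" and Em Ep :: "('a \<times> 'a) set"
  assumes stc: "simple_temporal_clique V lam"
    and vm: "valid_choice (minus_arcs V lam) Em"
    and vp: "valid_choice (plus_arcs V lam) Ep"
begin

definition "T = forward_tree lam Em"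
definition "T' = backward_tree lam Ep"
definition "S = {{u, v} | u v. (u, v) \<in> T \<union> T'} \<union> {e \<in> clique_edges V. \<exists>u v. e = {u, v} \<and>
                  u \<in> emitters V T \<and> v \<in> collectors V T'}"

lemma finV: "finite V" using stc unfolding simple_temporal_clique_def by auto

lemma dist: "x \<in> V \<Longrightarrow> a \<in> V \<Longrightarrow> b \<in> V \<Longrightarrow> a \<noteq> x \<Longrightarrow> b \<noteq> x \<Longrightarrow> a \<noteq> b \<Longrightarrow> lam {a, x} \<noteq> lam {b, x}"
proof -
  assume as: "x \<in> V" "a \<in> V" "b \<in> V" "a \<noteq> x" "b \<noteq> x" "a \<noteq> b"
  have "{a, x} \<in> clique_edges V" "{b, x} \<in> clique_edges V" using as unfolding clique_edges_def by blast+
  moreover have "{a, x} \<noteq> {b, x}" using as by (auto simp: doubleton_eq_iff)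
  moreover have "{a, x} \<inter> {b, x} \<noteq> {}" by auto
  moreover have H: "\<forall>e\<in>clique_edges V. \<forall>f\<in>clique_edges V. e \<noteq> f \<and> e \<inter> f \<noteq> {} \<longrightarrow> lam e \<noteq> lam f"
    using stc unfolding simple_temporal_clique_def by simp
  ultimately show ?thesis by simp
qed

definition "Sc c = {e \<in> clique_edges V. c \<in> e}"

lemma Sc_fin: "finite (Sc c)"
proof -
  have "Sc c \<subseteq> Pow V" unfolding Sc_def clique_edges_def by auto
  then show ?thesis using finV by (meson finite_Pow_iff finite_subset)
qed

lemma Sc_mem: "c \<in> V \<Longrightarrow> v \<in> V \<Longrightarrow> v \<noteq> c \<Longrightarrow> {v, c} \<in> Sc c"
  unfolding Sc_def clique_edges_def by auto

lemma emin: "c \<in> V \<Longrightarrow> p \<in> V \<Longrightarrow> p \<noteq> c \<Longrightarrow> {p, c} = e_min V lam c \<Longrightarrow> v \<in> V \<Longrightarrow> v \<noteq> c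
   \<Longrightarrow> lam {p, c} \<le> lam {v, c}"
  unfolding e_min_def using arg_min_least[OF Sc_fin, of c "{v,c}" lam] Sc_mem
  unfolding Sc_def by auto

lemma emax: "c \<in> V \<Longrightarrow> p \<in> V \<Longrightarrow> p \<noteq> c \<Longrightarrow> {p, c} = e_max V lam c \<Longrightarrow> v \<in> V \<Longrightarrow> v \<noteq> c
   \<Longrightarrow> lam {v, c} \<le> lam {p, c}"
proof -
  assume as: "c \<in> V" "p \<in> V" "p \<noteq> c" "{p, c} = e_max V lam c" "v \<in> V" "v \<noteq> c"
  have "\<forall>y. y \<in> Sc c \<longrightarrow> lam y < Max (lam ` Sc c) + 1"
    using Sc_fin by (simp add: le_imp_less_Suc)
  then have "lam {v, c} \<le> lam (arg_max_on lam (Sc c))"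
    unfolding arg_max_on_def using arg_max_nat_le[of "\<lambda>x. x \<in> Sc c" "{v,c}" lam] Sc_mem as by blast
  then show ?thesis using as unfolding e_max_def Sc_def by simp
qed

lemma Em_sub: "(p, c) \<in> Em \<Longrightarrow> p \<in> V \<and> c \<in> V \<and> p \<noteq> c \<and> {p, c} = e_min V lam c"
  using vm unfolding valid_choice_def minus_arcs_def by auto

lemma Ep_sub: "(v, u) \<in> Ep \<Longrightarrow> u \<in> V \<and> v \<in> V \<and> u \<noteq> v \<and> {u, v} = e_max V lam v"
  using vp unfolding valid_choice_def plus_arcs_def by auto

lemma Em_min: "(p, c) \<in> Em \<Longrightarrow> v \<in> V \<Longrightarrow> v \<noteq> c \<Longrightarrow> lam {p, c} \<le> lam {v, c}"
  using Em_sub emin by blast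

lemma Ep_max: "(v, u) \<in> Ep \<Longrightarrow> q \<in> V \<Longrightarrow> q \<noteq> v \<Longrightarrow> lam {q, v} \<le> lam {u, v}"
  using Ep_sub emax by blast

lemma Em_un: "(p, c) \<in> Em \<Longrightarrow> (p', c) \<in> Em \<Longrightarrow> p = p'"
proof -
  assume a: "(p, c) \<in> Em" "(p', c) \<in> Em"
  then have "{p, c} = {p', c}" "p \<noteq> c" using Em_sub by metis+
  then show ?thesis by (simp add: doubleton_eq_iff)
qed

lemma Ep_un: "(v, u) \<in> Ep \<Longrightarrow> (v, u') \<in> Ep \<Longrightarrow> u = u'"
proof -
  assume a: "(v, u) \<in> Ep" "(v, u') \<in> Ep"
  then have "{u, v} = {u', v}" "u \<noteq> v" using Ep_sub by metis+
  then show ?thesis by (simp add: doubleton_eq_iff)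
qed

lemma Em_opp: "(u, v) \<in> Em \<Longrightarrow> (v, u) \<notin> Em"
  using vm unfolding valid_choice_def by auto

lemma Ep_opp: "(u, v) \<in> Ep \<Longrightarrow> (v, u) \<notin> Ep"
  using vp unfolding valid_choice_def by auto

end


context fw begin

lemma T_cases: "(x, y) \<in> T \<Longrightarrow>
   ((x, y) \<in> Em \<and> (outdeg Em x < 2 \<or> (\<forall>w. (x, w) \<in> Em \<longrightarrow> lam {x, w} \<le> lam {x, y}))) \<or>
   ((y, x) \<in> Em \<and> outdeg Em y \<ge> 2 \<and> \<not> (\<forall>w. (y, w) \<in> Em \<longrightarrow> lam {y, w} \<le> lam {y, x}) \<and> outdeg Em x = 0)"
  unfolding T_def forward_tree_def by blast

lemma T'_cases: "(x, y) \<in> T' \<Longrightarrow>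
   ((x, y) \<in> Ep \<and> (indeg Ep y < 2 \<or> (\<forall>w. (w, y) \<in> Ep \<longrightarrow> lam {x, y} \<le> lam {w, y}))) \<or>
   ((y, x) \<in> Ep \<and> indeg Ep x \<ge> 2 \<and> \<not> (\<forall>w. (w, x) \<in> Ep \<longrightarrow> lam {y, x} \<le> lam {w, x}) \<and> indeg Ep y = 0)"
  unfolding T'_def backward_tree_def by blast

lemma T_V: "(x, y) \<in> T \<Longrightarrow> x \<in> V \<and> y \<in> V \<and> x \<noteq> y"
  using T_cases Em_sub by blast

lemma T'_V: "(x, y) \<in> T' \<Longrightarrow> x \<in> V \<and> y \<in> V \<and> x \<noteq> y"
  using T'_cases Ep_sub by blast

lemma ic: "{a, b} = {b, a}" by blast

lemma T_lt: "(x, y) \<in> T \<Longrightarrow> (y, z) \<in> T \<Longrightarrow> lam {x, y} < lam {y, z}"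
proof -
  assume xy: "(x, y) \<in> T" and yz: "(y, z) \<in> T"
  show ?thesis
    using T_cases[OF xy]
  proof
    assume K1: "(x, y) \<in> Em \<and> (outdeg Em x < 2 \<or> (\<forall>w. (x, w) \<in> Em \<longrightarrow> lam {x, w} \<le> lam {x, y}))"
    show ?thesis using T_cases[OF yz]
    proof
      assume K2: "(y, z) \<in> Em \<and> (outdeg Em y < 2 \<or> (\<forall>w. (y, w) \<in> Em \<longrightarrow> lam {y, w} \<le> lam {y, z}))"
      then have "x \<noteq> z" using K1 Em_opp by blast
      moreover have "z \<in> V" "z \<noteq> y" "x \<in> V" "y \<in> V" "x \<noteq> y" using K2 K1 Em_sub by blast+
      ultimately have "lam {x, y} \<le> lam {z, y}" "lam {x, y} \<noteq> lam {z, y}"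
        using Em_min[of x y z] K1 dist[of y x z] by auto
      then show ?thesis by (simp add: ic[of y z])
    next
      assume R2: "(z, y) \<in> Em \<and> outdeg Em z \<ge> 2 \<and> \<not> (\<forall>w. (z, w) \<in> Em \<longrightarrow> lam {z, w} \<le> lam {z, y}) \<and> outdeg Em y = 0"
      then have "z = x" using K1 Em_un by blast
      then show ?thesis using K1 R2 by auto
    qed
  next
    assume R1: "(y, x) \<in> Em \<and> outdeg Em y \<ge> 2 \<and> \<not> (\<forall>w. (y, w) \<in> Em \<longrightarrow> lam {y, w} \<le> lam {y, x}) \<and> outdeg Em x = 0"
    show ?thesis using T_cases[OF yz]
    proof
      assume K2: "(y, z) \<in> Em \<and> (outdeg Em y < 2 \<or> (\<forall>w. (y, w) \<in> Em \<longrightarrow> lam {y, w} \<le> lam {y, z}))"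
      then have "\<forall>w. (y, w) \<in> Em \<longrightarrow> lam {y, w} \<le> lam {y, z}" using R1 by auto
      then have "lam {y, x} < lam {y, z}" using R1 by force
      then show ?thesis by (simp add: ic[of x y])
    next
      assume R2: "(z, y) \<in> Em \<and> outdeg Em z \<ge> 2 \<and> \<not> (\<forall>w. (z, w) \<in> Em \<longrightarrow> lam {z, w} \<le> lam {z, y}) \<and> outdeg Em y = 0"
      then show ?thesis using R1 by auto
    qed
  qed
qed

lemma T'_lt: "(x, y) \<in> T' \<Longrightarrow> (y, z) \<in> T' \<Longrightarrow> lam {x, y} < lam {y, z}"
proof -
  assume xy: "(x, y) \<in> T'" and yz: "(y, z) \<in> T'"
  show ?thesis
    using T'_cases[OF xy]
  proof
    assume K1: "(x, y) \<in> Ep \<and> (indeg Ep y < 2 \<or> (\<forall>w. (w, y) \<in> Ep \<longrightarrow> lam {x, y} \<le> lam {w, y}))"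
    show ?thesis using T'_cases[OF yz]
    proof
      assume K2: "(y, z) \<in> Ep \<and> (indeg Ep z < 2 \<or> (\<forall>w. (w, z) \<in> Ep \<longrightarrow> lam {y, z} \<le> lam {w, z}))"
      then have "x \<noteq> z" using K1 Ep_opp by blast
      moreover have "z \<in> V" "z \<noteq> y" "x \<in> V" "y \<in> V" "x \<noteq> y" using K2 K1 Ep_sub by blast+
      ultimately have "lam {x, y} \<le> lam {z, y}" "lam {x, y} \<noteq> lam {z, y}"
        using Ep_max[of y z x] K2 dist[of y x z] by (auto simp: ic[of x y])
      then show ?thesis by (simp add: ic[of y z])
    next
      assume R2: "(z, y) \<in> Ep \<and> indeg Ep y \<ge> 2 \<and> \<not> (\<forall>w. (w, y) \<in> Ep \<longrightarrow> lam {z, y} \<le> lam {w, y}) \<and> indeg Ep z = 0"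
      then have "\<forall>w. (w, y) \<in> Ep \<longrightarrow> lam {x, y} \<le> lam {w, y}" using K1 by auto
      then have "lam {x, y} < lam {z, y}" using R2 by force
      then show ?thesis by (simp add: ic[of y z])
    qed
  next
    assume R1: "(y, x) \<in> Ep \<and> indeg Ep x \<ge> 2 \<and> \<not> (\<forall>w. (w, x) \<in> Ep \<longrightarrow> lam {y, x} \<le> lam {w, x}) \<and> indeg Ep y = 0"
    show ?thesis using T'_cases[OF yz]
    proof
      assume K2: "(y, z) \<in> Ep \<and> (indeg Ep z < 2 \<or> (\<forall>w. (w, z) \<in> Ep \<longrightarrow> lam {y, z} \<le> lam {w, z}))"
      then have "z = x" using R1 Ep_un by blast
      then show ?thesis using K2 R1 by auto
    next
      assume R2: "(z, y) \<in> Ep \<and> indeg Ep y \<ge> 2 \<and> \<not> (\<forall>w. (w, y) \<in> Ep \<longrightarrow> lam {z, y} \<le> lam {w, y}) \<and> indeg Ep z = 0"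
      then show ?thesis using R1 by auto
    qed
  qed
qed

end


context fw begin

lemma T_fin: "finite {z. (y, z) \<in> T}"
  by (rule finite_subset[OF _ finV]) (auto dest: T_V)

lemma T'_fin: "finite {z. (z, y) \<in> T'}"
  by (rule finite_subset[OF _ finV]) (auto dest: T'_V)

lemma emit_noarc: "y \<in> emitters V T \<Longrightarrow> (y, z) \<notin> T"
  using T_fin[of y] unfolding emitters_def outdeg_def by auto

lemma coll_noarc: "y \<in> collectors V T' \<Longrightarrow> (z, y) \<notin> T'"
  using T'_fin[of y] unfolding collectors_def indeg_def by auto

lemma nonemit_arc: "y \<in> V \<Longrightarrow> y \<notin> emitters V T \<Longrightarrow> \<exists>z. (y, z) \<in> T"
proof -
  assume "y \<in> V" "y \<notin> emitters V T"
  then have "card {z. (y, z) \<in> T} \<noteq> 0" unfolding emitters_def outdeg_def by simp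
  then have "{z. (y, z) \<in> T} \<noteq> {}" by force
  then show ?thesis by blast
qed

lemma noncoll_arc: "y \<in> V \<Longrightarrow> y \<notin> collectors V T' \<Longrightarrow> \<exists>z. (z, y) \<in> T'"
proof -
  assume "y \<in> V" "y \<notin> collectors V T'"
  then have "card {z. (z, y) \<in> T'} \<noteq> 0" unfolding collectors_def indeg_def by simp
  then have "{z. (z, y) \<in> T'} \<noteq> {}" by force
  then show ?thesis by blast
qed

lemma T_S: "(a, b) \<in> T \<Longrightarrow> {a, b} \<in> S" unfolding S_def by blast
lemma T'_S: "(a, b) \<in> T' \<Longrightarrow> {a, b} \<in> S" unfolding S_def by blast

lemma hub_S: "u \<in> emitters V T \<Longrightarrow> v \<in> collectors V T' \<Longrightarrow> u \<noteq> v \<Longrightarrow> {u, v} \<in> S"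
  unfolding S_def emitters_def collectors_def clique_edges_def by blast

lemma outdeg2_arc: "outdeg Em y \<ge> 2 \<Longrightarrow> \<exists>z. (y, z) \<in> T"
proof -
  assume a: "outdeg Em y \<ge> 2"
  then have "{w. (y, w) \<in> Em} \<noteq> {}" unfolding outdeg_def by (metis card.empty not_numeral_le_zero)
  then obtain k where k: "(y, k) \<in> Em" by auto
  have "\<forall>w. (y, w) \<in> Em \<longrightarrow> lam {y, w} < Max (lam ` Sc y) + 1"
  proof (intro allI impI)
    fix w assume "(y, w) \<in> Em"
    then have "{w, y} \<in> Sc y" using Em_sub Sc_mem by blast
    then have "lam {w, y} \<le> Max (lam ` Sc y)" using Sc_fin by simp
    then show "lam {y, w} < Max (lam ` Sc y) + 1" by (simp add: ic[of y w])
  qed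
  then obtain z where z: "(y, z) \<in> Em" "\<forall>w. (y, w) \<in> Em \<longrightarrow> lam {y, w} \<le> lam {y, z}"
    using ex_has_greatest_nat[of "\<lambda>w. (y, w) \<in> Em" k "\<lambda>w. lam {y, w}"] k by blast
  then have "(y, z) \<in> T" unfolding T_def forward_tree_def by blast
  then show ?thesis by blast
qed

lemma indeg2_arc: "indeg Ep y \<ge> 2 \<Longrightarrow> \<exists>z. (z, y) \<in> T'"
proof -
  assume a: "indeg Ep y \<ge> 2"
  then have "{w. (w, y) \<in> Ep} \<noteq> {}" unfolding indeg_def by (metis card.empty not_numeral_le_zero)
  then obtain k where k: "(k, y) \<in> Ep" by auto
  obtain z where z: "(z, y) \<in> Ep" "\<forall>w. (w, y) \<in> Ep \<longrightarrow> lam {z, y} \<le> lam {w, y}"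
    using ex_has_least_nat[of "\<lambda>w. (w, y) \<in> Ep" k "\<lambda>w. lam {w, y}"] k by blast
  then have "(z, y) \<in> T'" unfolding T'_def backward_tree_def by blast
  then show ?thesis by blast
qed

lemma T_into_emit: "(x, y) \<in> T \<Longrightarrow> y \<in> emitters V T \<Longrightarrow> (x, y) \<in> Em"
proof -
  assume a: "(x, y) \<in> T" "y \<in> emitters V T"
  have "\<not> outdeg Em y \<ge> 2" using outdeg2_arc emit_noarc[OF a(2)] by blast
  then show ?thesis using T_cases[OF a(1)] by blast
qed

lemma T'_from_coll: "(x, y) \<in> T' \<Longrightarrow> x \<in> collectors V T' \<Longrightarrow> (x, y) \<in> Ep"
proof -
  assume a: "(x, y) \<in> T'" "x \<in> collectors V T'"
  have "\<not> indeg Ep x \<ge> 2" using indeg2_arc coll_noarc[OF a(2)] by blast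
  then show ?thesis using T'_cases[OF a(1)] by blast
qed

definition "Kb = Max (lam ` clique_edges V)"

lemma T_Kb: "(y, z) \<in> T \<Longrightarrow> lam {y, z} \<le> Kb"
proof -
  assume a: "(y, z) \<in> T"
  have "clique_edges V \<subseteq> Pow V" unfolding clique_edges_def by auto
  then have "finite (clique_edges V)" using finV by (meson finite_Pow_iff finite_subset)
  moreover have "{y, z} \<in> clique_edges V" using T_V[OF a] unfolding clique_edges_def by blast
  ultimately show ?thesis unfolding Kb_def by simp
qed

lemma fwd: "(x, y) \<in> T \<Longrightarrow> \<exists>u w. u \<in> emitters V T \<and> (w, u) \<in> Em \<and> (w, u) \<in> T \<and>
   (x = w \<and> y = u \<or> (\<exists>a. J lam S x w (lam {x, y}) a \<and> a < lam {w, u}))"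
proof (induction "Kb - lam {x, y}" arbitrary: x y rule: less_induct)
  case less
  show ?case
  proof (cases "y \<in> emitters V T")
    case True
    then show ?thesis using less.prems T_into_emit by blast
  next
    case False
    obtain z where yz: "(y, z) \<in> T" using nonemit_arc False T_V less.prems by blast
    have lt: "lam {x, y} < lam {y, z}" using T_lt less.prems yz by blast
    then have "Kb - lam {y, z} < Kb - lam {x, y}" using T_Kb[OF yz] by linarith
    from less.hyps[OF this yz] obtain u w where uw: "u \<in> emitters V T" "(w, u) \<in> Em" "(w, u) \<in> T"
      and c: "y = w \<and> z = u \<or> (\<exists>a. J lam S y w (lam {y, z}) a \<and> a < lam {w, u})" by blast
    have Jxy: "J lam S x y (lam {x, y}) (lam {x, y})" using Je T_S less.prems by metis
    from c show ?thesis
    proof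
      assume "y = w \<and> z = u"
      then show ?thesis using uw Jxy lt by blast
    next
      assume "\<exists>a. J lam S y w (lam {y, z}) a \<and> a < lam {w, u}"
      then obtain a where "J lam S y w (lam {y, z}) a" "a < lam {w, u}" by blast
      then show ?thesis using uw Jc[OF Jxy _ lt] by blast
    qed
  qed
qed

lemma bwd: "(x, y) \<in> T' \<Longrightarrow> \<exists>v z. v \<in> collectors V T' \<and> (v, z) \<in> Ep \<and> (v, z) \<in> T' \<and>
   (v = x \<and> z = y \<or> (\<exists>b. J lam S z y b (lam {x, y}) \<and> lam {v, z} < b))"
proof (induction "lam {x, y}" arbitrary: x y rule: less_induct)
  case less
  show ?case
  proof (cases "x \<in> collectors V T'")
    case True
    then show ?thesis using less.prems T'_from_coll by blast
  next
    case False
    obtain x' where xx: "(x', x) \<in> T'" using noncoll_arc False T'_V less.prems by blast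
    have lt: "lam {x', x} < lam {x, y}" using T'_lt less.prems xx by blast
    from less.hyps[OF lt xx] obtain v z where vz: "v \<in> collectors V T'" "(v, z) \<in> Ep" "(v, z) \<in> T'"
      and c: "v = x' \<and> z = x \<or> (\<exists>b. J lam S z x b (lam {x', x}) \<and> lam {v, z} < b)" by blast
    have Jxy: "J lam S x y (lam {x, y}) (lam {x, y})" using Je T'_S less.prems by metis
    from c show ?thesis
    proof
      assume "v = x' \<and> z = x"
      then show ?thesis using vz Jxy lt by blast
    next
      assume "\<exists>b. J lam S z x b (lam {x', x}) \<and> lam {v, z} < b"
      then obtain b where "J lam S z x b (lam {x', x})" "lam {v, z} < b" by blast
      then show ?thesis using vz Jc[OF _ Jxy lt] by blast
    qed
  qed
qed

end


context fw begin

lemma FW: "x \<in> V \<Longrightarrow> x \<notin> emitters V T \<Longrightarrow> \<exists>u w. u \<in> emitters V T \<and> (w, u) \<in> Em \<and> (w, u) \<in> T \<and>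
   (x = w \<or> (\<exists>s a. J lam S x w s a \<and> a < lam {w, u}))"
proof -
  assume "x \<in> V" "x \<notin> emitters V T"
  then obtain y where "(x, y) \<in> T" using nonemit_arc by blast
  from fwd[OF this] obtain u w where "u \<in> emitters V T" "(w, u) \<in> Em" "(w, u) \<in> T"
    "x = w \<and> y = u \<or> (\<exists>a. J lam S x w (lam {x, y}) a \<and> a < lam {w, u})" by blast
  then show ?thesis by blast
qed

lemma BW: "y \<in> V \<Longrightarrow> y \<notin> collectors V T' \<Longrightarrow> \<exists>v z. v \<in> collectors V T' \<and> (v, z) \<in> Ep \<and> (v, z) \<in> T' \<and>
   (z = y \<or> (\<exists>b t. J lam S z y b t \<and> lam {v, z} < b))"
proof -
  assume "y \<in> V" "y \<notin> collectors V T'"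
  then obtain x where "(x, y) \<in> T'" using noncoll_arc by blast
  from bwd[OF this] obtain v z where "v \<in> collectors V T'" "(v, z) \<in> Ep" "(v, z) \<in> T'"
    "v = x \<and> z = y \<or> (\<exists>b. J lam S z y b (lam {x, y}) \<and> lam {v, z} < b)" by blast
  then show ?thesis by blast
qed

lemma cat: "J lam S x y s t \<Longrightarrow> J lam S y z s' t' \<Longrightarrow> t < s' \<Longrightarrow> \<exists>s t. J lam S x z s t"
  by (meson Jc)

lemma main: "x \<in> V \<Longrightarrow> y \<in> V \<Longrightarrow> x \<noteq> y \<Longrightarrow> \<exists>s t. J lam S x y s t"
proof -
  assume xV: "x \<in> V" and yV: "y \<in> V" and xy: "x \<noteq> y"
  show ?thesis
  proof (cases "x \<in> emitters V T")
    case xe: True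
    show ?thesis
    proof (cases "y \<in> collectors V T'")
      case True
      have "J lam S x y (lam {x, y}) (lam {x, y})" by (rule Je[OF hub_S[OF xe True xy]])
      then show ?thesis by blast
    next
      case False
      then obtain v z where v: "v \<in> collectors V T'" "(v, z) \<in> Ep" "(v, z) \<in> T'"
        and suf: "z = y \<or> (\<exists>b t. J lam S z y b t \<and> lam {v, z} < b)" using BW yV by blast
      have Jvz: "J lam S v z (lam {v, z}) (lam {v, z})" by (rule Je[OF T'_S[OF v(3)]])
      obtain t where SY: "J lam S v y (lam {v, z}) t"
      proof (cases "z = y")
        case True then show ?thesis using that Jvz by simp
      next
        case False
        then obtain b t where "J lam S z y b t" "lam {v, z} < b" using suf by blast
        then show ?thesis using that Jc[OF Jvz] by blast
      qed
      show ?thesis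
      proof (cases "x = v")
        case True then show ?thesis using SY by blast
      next
        case xv: False
        show ?thesis
        proof (cases "z = x")
          case True
          then obtain b t where "J lam S z y b t" using suf xy by blast
          then show ?thesis using True by blast
        next
          case False
          have zV: "z \<in> V" "v \<in> V" "z \<noteq> v" using Ep_sub v(2) by blast+
          have "lam {x, v} \<le> lam {z, v}" using Ep_max[OF v(2) xV xv] .
          moreover have "lam {x, v} \<noteq> lam {z, v}" using dist[of v x z] zV xV xv False by auto
          ultimately have lt: "lam {x, v} < lam {v, z}" by (simp add: ic[of v z])
          have "J lam S x v (lam {x, v}) (lam {x, v})" by (rule Je[OF hub_S[OF xe v(1) xv]])
          from Jc[OF this SY lt] show ?thesis by blast
        qed
      qed
    qed
  next
    case xne: False
    then obtain u w where u: "u \<in> emitters V T" "(w, u) \<in> Em" "(w, u) \<in> T"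
      and pre: "x = w \<or> (\<exists>s a. J lam S x w s a \<and> a < lam {w, u})" using FW xV by blast
    have Jwu: "J lam S w u (lam {w, u}) (lam {w, u})" by (rule Je[OF T_S[OF u(3)]])
    obtain s0 where PX: "J lam S x u s0 (lam {w, u})"
    proof (cases "x = w")
      case True then show ?thesis using that Jwu by simp
    next
      case False
      then obtain s a where "J lam S x w s a" "a < lam {w, u}" using pre by blast
      then show ?thesis using that Jc[OF _ Jwu] by blast
    qed
    have wV: "w \<in> V" "u \<in> V" "w \<noteq> u" using Em_sub u(2) by blast+
    show ?thesis
    proof (cases "y \<in> collectors V T'")
      case yc: True
      show ?thesis
      proof (cases "u = y")
        case True then show ?thesis using PX by blast
      next
        case uy: False
        show ?thesis
        proof (cases "w = y")
          case True
          then obtain s a where "J lam S x w s a" using pre xy by blast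
          then show ?thesis using True by blast
        next
          case False
          have "lam {w, u} \<le> lam {y, u}" using Em_min[OF u(2) yV] uy by auto
          moreover have "lam {w, u} \<noteq> lam {y, u}" using dist[of u w y] wV yV uy False by auto
          ultimately have lt: "lam {w, u} < lam {u, y}" by (simp add: ic[of u y])
          have "J lam S u y (lam {u, y}) (lam {u, y})" by (rule Je[OF hub_S[OF u(1) yc uy]])
          from Jc[OF PX this lt] show ?thesis by blast
        qed
      qed
    next
      case False
      then obtain v z where v: "v \<in> collectors V T'" "(v, z) \<in> Ep" "(v, z) \<in> T'"
        and suf: "z = y \<or> (\<exists>b t. J lam S z y b t \<and> lam {v, z} < b)" using BW yV by blast
      have Jvz: "J lam S v z (lam {v, z}) (lam {v, z})" by (rule Je[OF T'_S[OF v(3)]])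
      obtain t0 where SY: "J lam S v y (lam {v, z}) t0"
      proof (cases "z = y")
        case True then show ?thesis using that Jvz by simp
      next
        case False
        then obtain b t where "J lam S z y b t" "lam {v, z} < b" using suf by blast
        then show ?thesis using that Jc[OF Jvz] by blast
      qed
      have zV: "z \<in> V" "v \<in> V" "z \<noteq> v" using Ep_sub v(2) by blast+
      show ?thesis
      proof (cases "u = v")
        case uv: True
        show ?thesis
        proof (cases "w = z")
          case False
          have "lam {w, u} \<le> lam {z, u}" using Em_min[OF u(2) zV(1)] zV uv by auto
          moreover have "lam {w, u} \<noteq> lam {z, u}" using dist[of u w z] wV zV uv False by auto
          ultimately have lt: "lam {w, u} < lam {v, z}" using uv by (simp add: ic[of v z])
          have SY': "J lam S u y (lam {v, z}) t0" using SY uv by simp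
          from Jc[OF PX SY' lt] show ?thesis by blast
        next
          case wz: True
          show ?thesis
          proof (cases "x = w")
            case True
            then obtain b t where "J lam S z y b t" using suf wz xy by blast
            then show ?thesis using True wz by blast
          next
            case False
            then obtain s a where Jxw: "J lam S x w s a" "a < lam {w, u}" using pre by blast
            show ?thesis
            proof (cases "z = y")
              case True then show ?thesis using Jxw wz by blast
            next
              case False
              then obtain b t where Jzy: "J lam S z y b t" "lam {v, z} < b" using suf by blast
              have "a < lam {v, z}" using Jxw uv wz by (simp add: ic[of z v])
              then have "a < b" using Jzy(2) by linarith
              have Jzy': "J lam S w y b t" using Jzy wz by simp
              from Jc[OF Jxw(1) Jzy' \<open>a < b\<close>] show ?thesis by blast
            qed
          qed
        qed
      next
        case uv: False
        have H: "J lam S u v (lam {u, v}) (lam {u, v})" by (rule Je[OF hub_S[OF u(1) v(1) uv]])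
        show ?thesis
        proof (cases "w = v")
          case wv: False
          have "lam {w, u} \<le> lam {v, u}" using Em_min[OF u(2) zV(2)] uv by auto
          moreover have "lam {w, u} \<noteq> lam {v, u}" using dist[of u w v] wV zV uv wv by auto
          ultimately have lt1: "lam {w, u} < lam {u, v}" by (simp add: ic[of u v])
          show ?thesis
          proof (cases "z = u")
            case zu: False
            have "lam {u, v} \<le> lam {z, v}" using Ep_max[OF v(2) wV(2)] uv by auto
            moreover have "lam {u, v} \<noteq> lam {z, v}" using dist[of v u z] wV zV uv zu by auto
            ultimately have lt2: "lam {u, v} < lam {v, z}" by (simp add: ic[of v z])
            have "J lam S x v s0 (lam {u, v})" by (rule Jc[OF PX H lt1])
            from Jc[OF this SY lt2] show ?thesis by blast
          next
            case zu: True
            show ?thesis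
            proof (cases "z = y")
              case True then show ?thesis using PX zu by blast
            next
              case False
              then obtain b t where Jzy: "J lam S z y b t" "lam {v, z} < b" using suf by blast
              have "lam {w, u} < b" using lt1 zu Jzy(2) by (simp add: ic[of u v])
              have Jzy': "J lam S u y b t" using Jzy zu by simp
              from Jc[OF PX Jzy' \<open>lam {w, u} < b\<close>] show ?thesis by blast
            qed
          qed
        next
          case wv: True
          show ?thesis
          proof (cases "z = u")
            case zu: True
            show ?thesis
            proof (cases "z = y")
              case True then show ?thesis using PX zu by blast
            next
              case False
              then obtain b t where Jzy: "J lam S z y b t" "lam {v, z} < b" using suf by blast
              have "lam {w, u} < b" using wv zu Jzy(2) by simp
              have Jzy': "J lam S u y b t" using Jzy zu by simp
              from Jc[OF PX Jzy' \<open>lam {w, u} < b\<close>] show ?thesis by blast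
            qed
          next
            case zu: False
            show ?thesis
            proof (cases "x = w")
              case True then show ?thesis using SY wv by blast
            next
              case False
              then obtain s a where Jxw: "J lam S x w s a" "a < lam {w, u}" using pre by blast
              have "lam {u, v} \<le> lam {z, v}" using Ep_max[OF v(2) wV(2)] uv by auto
              then have "a < lam {v, z}" using Jxw wv by (simp add: ic[of v z] ic[of v u])
              moreover have "J lam S x v s a" using Jxw wv by simp
              ultimately show ?thesis using Jc[OF _ SY] by blast
            qed
          qed
        qed
      qed
    qed
  qed
qed

lemma S_sub: "S \<subseteq> clique_edges V"
proof
  fix e assume "e \<in> S"
  then consider (a) u v where "e = {u, v}" "(u, v) \<in> T \<union> T'" | (b) "e \<in> clique_edges V"
    unfolding S_def by blast
  then show "e \<in> clique_edges V"
  proof cases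
    case a
    then have "u \<in> V" "v \<in> V" "u \<noteq> v" using T_V T'_V by blast+
    then show ?thesis using a unfolding clique_edges_def by blast
  qed simp
qed

lemma spanner: "temporal_spanner V lam S"
  unfolding temporal_spanner_def
proof (intro conjI ballI impI S_sub)
  fix x y assume "x \<in> V" "y \<in> V" "x \<noteq> y"
  then obtain s t where "J lam S x y s t" using main by blast
  then show "\<exists>p. journey lam S p x y" by (rule J_journey)
qed

end

theorem theorem6:
  fixes V :: "'a set" and lam :: "'a set \<Rightarrow> nat"
    and Em Ep :: "('a \<times> 'a) set"
  assumes "simple_temporal_clique V lam"
    and "valid_choice (minus_arcs V lam) Em"
    and "valid_choice (plus_arcs V lam) Ep"
  shows "temporal_spanner V lam
           ({{u, v} | u v. (u, v) \<in> forward_tree lam Em \<union> backward_tree lam Ep}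
            \<union> {e \<in> clique_edges V. \<exists>u v. e = {u, v} \<and>
                  u \<in> emitters V (forward_tree lam Em) \<and>
                  v \<in> collectors V (backward_tree lam Ep)})"
proof -
  interpret fw V lam Em Ep using assms by unfold_locales
  show ?thesis using spanner unfolding S_def T_def T'_def .
qed

end
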